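(* Let $E$ be a real Banach space, $K\subset E$ nonempty closed convex, $g\in\mathcal F$ totally convex on $E$ satisfying H1–H2, $Y$ a real Banach space containing a closed, convex, pointed cone $C$ with nonempty interior, $f:E\times E\to Y$ and $T:K\to\mathcal P(K)$. Assume B1–B4. Then $DS(f,T)$ is closed and convex.
   Context: $\mathcal F$: functions $g:E\to\mathbb R$ strictly convex, lower semicontinuous, Gâteaux differentiable (derivative $g'$). $D_g(x,y)=g(x)-g(y)-\langle x-y,g'(y)\rangle$; $v_g(x,t)=\inf\{D_g(y,x):\|y-x\|=t\}$; totally convex: $v_g(x,t)>0$ for all $x$, $t>0$. H1: level sets of $D_g(x,\cdot)$ bounded for all $x$; H2: $\inf_{x\in A}v_g(x,t)>0$ for all $t>0$ and bounded $A$. $\Pi^g_D(x)$ = unique minimizer of $D_g(\cdot,x)$ over nonempty closed convex $D$. $\mathrm{Fix}(T)=\{x\in K:x\in T(x)\}$. $T$ quasi $D_g$-nonexpansive: $S(x):=\Pi^g_{T(x)}(x)$ has $\mathrm{Fix}(S)\ne\emptyset$ and $D_g(p,S(x))\le D_g(p,x)$ for $p\in\mathrm{Fix}(S)$, $x\in K$. Demiclosed: $x^k\rightharpoonup\bar x$, $d(x^k,T(x^k))\to0$ imply $\bar x\in\mathrm{Fix}(T)$. Lower semicontinuous at $\bar x$: $x^k\to\bar x$ in $K$, $\bar y\in T(\bar x)$ imply existence of $y^k\in T(x^k)$ with $y^k\to\bar y$. $y\preceq y'$ iff $y'-y\in C$; $C$-convex: $G(tx+(1-t)y)\preceq tG(x)+(1-t)G(y)$.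 B1: $f(x,x)=0$ for all $x$. B2: $f$ uniformly continuous on bounded subsets of $E\times E$. B3: $f(x,\cdot)$ is $C$-convex for all $x$. B4: $T$ has nonempty closed convex values, is demiclosed, lower semicontinuous at each point of $K$, and quasi $D_g$-nonexpansive. $DS(f,T)=\{x\in K:x\in T(x),\ f(y,x)\in-C\ \forall y\in K\}$. *)

theory Defs
  imports "HOL-Analysis.Analysis"
begin

definition strictly_convex :: "('a::real_vector \<Rightarrow> real) \<Rightarrow> bool" where
  "strictly_convex g \<longleftrightarrow> (\<forall>x y t. x \<noteq> y \<and> 0 < t \<and> t < 1 \<longrightarrow>
      g (t *\<^sub>R x + (1 - t) *\<^sub>R y) < t * g x + (1 - t) * g y)"

definition lsc :: "('a::topological_space \<Rightarrow> real) \<Rightarrow> bool" where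
  "lsc g \<longleftrightarrow> (\<forall>x. \<forall>e>0. \<forall>\<^sub>F y in at x. g x - e < g y)"

definition gateaux_deriv :: "('a::real_normed_vector \<Rightarrow> real) \<Rightarrow> ('a \<Rightarrow> 'a \<Rightarrow> real) \<Rightarrow> bool" where
  "gateaux_deriv g g' \<longleftrightarrow> (\<forall>y. bounded_linear (g' y) \<and>
      (\<forall>h. ((\<lambda>t. g (y + t *\<^sub>R h)) has_real_derivative g' y h) (at 0)))"

definition class_F :: "('a::real_normed_vector \<Rightarrow> real) \<Rightarrow> ('a \<Rightarrow> 'a \<Rightarrow> real) \<Rightarrow> bool" where
  "class_F g g' \<longleftrightarrow> strictly_convex g \<and> lsc g \<and> gateaux_deriv g g'"

definition bregman :: "('a::real_normed_vector \<Rightarrow> real) \<Rightarrow> ('a \<Rightarrow> 'a \<Rightarrow> real) \<Rightarrow> 'a \<Rightarrow> 'a \<Rightarrow> real" where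
  "bregman g g' x y = g x - g y - g' y (x - y)"

(* modulus of total convexity v_g(x,t) = inf { D_g(y,x) : ||y - x|| = t } (inf {} = +\<infinity>) *)
definition mod_tc :: "('a::real_normed_vector \<Rightarrow> real) \<Rightarrow> ('a \<Rightarrow> 'a \<Rightarrow> real) \<Rightarrow> 'a \<Rightarrow> real \<Rightarrow> ereal" where
  "mod_tc g g' x t = (INF y \<in> {y. norm (y - x) = t}. ereal (bregman g g' y x))"

definition totally_convex :: "('a::real_normed_vector \<Rightarrow> real) \<Rightarrow> ('a \<Rightarrow> 'a \<Rightarrow> real) \<Rightarrow> bool" where
  "totally_convex g g' \<longleftrightarrow> (\<forall>x. \<forall>t>0. mod_tc g g' x t > 0)"

definition H1 :: "('a::real_normed_vector \<Rightarrow> real) \<Rightarrow> ('a \<Rightarrow> 'a \<Rightarrow> real) \<Rightarrow> bool" where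
  "H1 g g' \<longleftrightarrow> (\<forall>x r. bounded {y. bregman g g' x y \<le> r})"

definition H2 :: "('a::real_normed_vector \<Rightarrow> real) \<Rightarrow> ('a \<Rightarrow> 'a \<Rightarrow> real) \<Rightarrow> bool" where
  "H2 g g' \<longleftrightarrow> (\<forall>A t. bounded A \<and> t > 0 \<longrightarrow> (INF x \<in> A. mod_tc g g' x t) > 0)"

definition bproj :: "('a::real_normed_vector \<Rightarrow> real) \<Rightarrow> ('a \<Rightarrow> 'a \<Rightarrow> real) \<Rightarrow> 'a set \<Rightarrow> 'a \<Rightarrow> 'a" where
  "bproj g g' D x = (THE z. z \<in> D \<and> (\<forall>y\<in>D. bregman g g' z x \<le> bregman g g' y x))"

definition Fix :: "'a set \<Rightarrow> ('a \<Rightarrow> 'a set) \<Rightarrow> 'a set" where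
  "Fix K T = {x \<in> K. x \<in> T x}"

definition quasi_Dg_nonexp ::
  "('a::real_normed_vector \<Rightarrow> real) \<Rightarrow> ('a \<Rightarrow> 'a \<Rightarrow> real) \<Rightarrow> 'a set \<Rightarrow> ('a \<Rightarrow> 'a set) \<Rightarrow> bool" where
  "quasi_Dg_nonexp g g' K T \<longleftrightarrow>
     (let S = (\<lambda>x. bproj g g' (T x) x); FS = {x \<in> K. S x = x} in
       FS \<noteq> {} \<and> (\<forall>p\<in>FS. \<forall>x\<in>K. bregman g g' p (S x) \<le> bregman g g' p x))"

definition weak_conv :: "(nat \<Rightarrow> 'a::real_normed_vector) \<Rightarrow> 'a \<Rightarrow> bool" where
  "weak_conv xs x \<longleftrightarrow> (\<forall>\<phi>::'a \<Rightarrow> real. bounded_linear \<phi> \<longrightarrow> (\<lambda>k. \<phi> (xs k)) \<longlonglongrightarrow> \<phi> x)"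

definition demiclosed :: "'a::real_normed_vector set \<Rightarrow> ('a \<Rightarrow> 'a set) \<Rightarrow> bool" where
  "demiclosed K T \<longleftrightarrow> (\<forall>xs x. (\<forall>k. xs k \<in> K) \<and> weak_conv xs x \<and>
       (\<lambda>k. infdist (xs k) (T (xs k))) \<longlonglongrightarrow> 0 \<longrightarrow> x \<in> Fix K T)"

definition lsc_map_at :: "'a::metric_space set \<Rightarrow> ('a \<Rightarrow> 'a set) \<Rightarrow> 'a \<Rightarrow> bool" where
  "lsc_map_at K T x \<longleftrightarrow> (\<forall>xs y. (\<forall>k. xs k \<in> K) \<and> xs \<longlonglongrightarrow> x \<and> y \<in> T x \<longrightarrow>
       (\<exists>ys. (\<forall>k. ys k \<in> T (xs k)) \<and> ys \<longlonglongrightarrow> y))"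

(* C-convexity of G : E -> Y w.r.t. the order y \<preceq> y' iff y' - y \<in> C *)
definition C_convex :: "'b::real_vector set \<Rightarrow> ('a::real_vector \<Rightarrow> 'b) \<Rightarrow> bool" where
  "C_convex C G \<longleftrightarrow> (\<forall>x y t. 0 \<le> t \<and> t \<le> 1 \<longrightarrow>
      (t *\<^sub>R G x + (1 - t) *\<^sub>R G y) - G (t *\<^sub>R x + (1 - t) *\<^sub>R y) \<in> C)"

definition DS :: "'a set \<Rightarrow> 'b::real_vector set \<Rightarrow> ('a \<Rightarrow> 'a \<Rightarrow> 'b) \<Rightarrow> ('a \<Rightarrow> 'a set) \<Rightarrow> 'a set" where
  "DS K C f T = {x \<in> K. x \<in> T x \<and> (\<forall>y\<in>K. f y x \<in> uminus ` C)}"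

end

theory Submission
  imports Defs
begin


lemma gd_lin: "class_F g g' \<Longrightarrow> bounded_linear (g' y)"
  by (simp add: class_F_def gateaux_deriv_def)

lemma lin_comb:
  assumes "bounded_linear L"
  shows "L (t *\<^sub>R a + s *\<^sub>R b) = t * L a + s * L b"
  using linear_add[OF bounded_linear.linear[OF assms]] linear_scale[OF bounded_linear.linear[OF assms]] by simp

lemma g_convex:
  assumes "class_F g g'" "0 \<le> t" "t \<le> 1"
  shows "g (t *\<^sub>R a + (1-t) *\<^sub>R b) \<le> t * g a + (1-t) * g b"
proof (cases "a = b \<or> t = 0 \<or> t = 1")
  case True
  then show ?thesis
  proof (elim disjE)
    assume "a = b"
    have "t *\<^sub>R a + (1-t) *\<^sub>R a = a"
      by (metis add.commute diff_add_cancel scaleR_left_distrib scaleR_one)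
    moreover have "t * g a + (1-t) * g a = g a" by (simp add: algebra_simps)
    ultimately show ?thesis using \<open>a = b\<close> by simp
  qed auto
next
  case False
  then show ?thesis using assms unfolding class_F_def strictly_convex_def
    by (smt (verit))
qed

lemma breg_self: "class_F g g' \<Longrightarrow> bregman g g' x x = 0"
  using linear_0[OF bounded_linear.linear[OF gd_lin]] by (simp add: bregman_def)

lemma breg_three:
  assumes "class_F g g'"
  shows "t * bregman g g' p y + (1-t) * bregman g g' q y
    = t * g p + (1-t) * g q - g (t *\<^sub>R p + (1-t) *\<^sub>R q) + bregman g g' (t *\<^sub>R p + (1-t) *\<^sub>R q) y"
proof -
  have e: "t *\<^sub>R p + (1-t) *\<^sub>R q - y = t *\<^sub>R (p-y) + (1-t) *\<^sub>R (q-y)"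
    by (simp add: algebra_simps)
  have "g' y (t *\<^sub>R p + (1-t) *\<^sub>R q - y) = t * g' y (p-y) + (1-t) * g' y (q-y)"
    unfolding e by (rule lin_comb[OF gd_lin[OF assms]])
  then show ?thesis by (simp add: bregman_def algebra_simps)
qed

lemma breg_convex1:
  assumes "class_F g g'" "0 \<le> t" "t \<le> 1"
  shows "bregman g g' (t *\<^sub>R p + (1-t) *\<^sub>R q) y \<le> t * bregman g g' p y + (1-t) * bregman g g' q y"
  using breg_three[OF assms(1), of t p y q] g_convex[OF assms, of p q] by linarith

lemma breg_pos:
  assumes F: "class_F g g'" and ne: "x \<noteq> y"
  shows "bregman g g' x y > 0"
proof -
  define \<phi> where "\<phi> s = g (y + s *\<^sub>R (x - y))" for s
  have d: "(\<phi> has_real_derivative g' y (x - y)) (at 0)"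
    using F unfolding class_F_def gateaux_deriv_def \<phi>_def by blast
  hence "((\<lambda>h. (\<phi> (0 + h) - \<phi> 0) / h) \<longlongrightarrow> g' y (x - y)) (at 0)"
    by (simp add: DERIV_def)
  hence lim: "((\<lambda>h. (\<phi> h - \<phi> 0) / h) \<longlongrightarrow> g' y (x - y)) (at_right 0)"
    by (simp add: filterlim_at_split)
  have ev: "eventually (\<lambda>h. (\<phi> h - \<phi> 0) / h \<le> 2 * (\<phi> (1/2) - \<phi> 0)) (at_right 0)"
  proof -
    have "eventually (\<lambda>h::real. 0 < h \<and> h < 1/2) (at_right 0)"
      by (simp add: eventually_at_right_field) (rule exI[of _ "1/2"], auto)
    moreover have "(\<phi> h - \<phi> 0) / h \<le> 2 * (\<phi> (1/2) - \<phi> 0)" if "0 < h" "h < 1/2" for h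
    proof -
      have pt: "y + h *\<^sub>R (x - y) = (2*h) *\<^sub>R (y + (1/2) *\<^sub>R (x - y)) + (1 - 2*h) *\<^sub>R y"
        by (simp add: algebra_simps)
      have "\<phi> h \<le> (2*h) * \<phi> (1/2) + (1 - 2*h) * \<phi> 0"
        unfolding \<phi>_def pt using g_convex[OF F, of "2*h" "y + (1/2) *\<^sub>R (x - y)" y] that by simp
      hence "\<phi> h - \<phi> 0 \<le> h * (2 * (\<phi> (1/2) - \<phi> 0))" by (simp add: algebra_simps)
      thus ?thesis using that by (simp add: divide_le_eq mult.commute)
    qed
    ultimately show ?thesis by (auto elim: eventually_mono)
  qed
  have le: "g' y (x - y) \<le> 2 * (\<phi> (1/2) - \<phi> 0)"
    by (rule tendsto_upperbound[OF lim ev]) simp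
  have "y + (1/2) *\<^sub>R (x - y) = (1/2) *\<^sub>R x + (1 - 1/2) *\<^sub>R y"
  proof -
    have "(1/2) *\<^sub>R y + (1/2) *\<^sub>R y = ((1/2) + (1/2::real)) *\<^sub>R y"
      by (rule scaleR_left_distrib[symmetric])
    thus ?thesis by (simp add: algebra_simps)
  qed
  hence "\<phi> (1/2) < (1/2) * g x + (1 - 1/2) * g y"
    using F ne unfolding class_F_def strictly_convex_def \<phi>_def by (metis field_sum_of_halves half_gt_zero_iff less_add_same_cancel1 zero_less_one)
  moreover have "\<phi> 0 = g y" by (simp add: \<phi>_def)
  ultimately show ?thesis using le by (simp add: bregman_def)
qed

lemma breg_nonneg: "class_F g g' \<Longrightarrow> bregman g g' x y \<ge> 0"
  by (cases "x = y") (auto simp: breg_self dest: breg_pos[of g g' x y])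

lemma breg_le0: "class_F g g' \<Longrightarrow> bregman g g' x y \<le> 0 \<Longrightarrow> x = y"
  using breg_pos[of g g' x y] by force



lemma half_half: fixes a :: "'a::real_vector" shows "(1/2::real) *\<^sub>R a + (1/2) *\<^sub>R a = a"
  using scaleR_left_distrib[of "1/2::real" "1/2" a, symmetric] by simp

lemma mid_diff: fixes a :: "'a::real_vector" shows "a - ((1/2) *\<^sub>R a + (1/2) *\<^sub>R b) = (1/2::real) *\<^sub>R (a - b)"
proof -
  have "a - ((1/2) *\<^sub>R a + (1/2) *\<^sub>R b) = ((1/2) *\<^sub>R a + (1/2) *\<^sub>R a) - ((1/2) *\<^sub>R a + (1/2) *\<^sub>R b)"
    by (simp only: half_half)
  also have "... = (1/2::real) *\<^sub>R (a - b)" by (simp add: scaleR_diff_right)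
  finally show ?thesis .
qed

lemma breg_scale:
  assumes F: "class_F g g'" and t: "0 < t" "t \<le> norm (a - w)"
  shows "\<exists>u. norm (u - w) = t \<and> bregman g g' u w * norm (a - w) \<le> t * bregman g g' a w"
proof -
  define s where "s = norm (a - w)"
  have s: "s > 0" using t s_def by linarith
  define u where "u = (t/s) *\<^sub>R a + (1 - t/s) *\<^sub>R w"
  have u': "u - w = (t/s) *\<^sub>R (a - w)" by (simp add: u_def algebra_simps)
  have "norm (u - w) = t" using s t unfolding u' s_def by simp
  moreover have "bregman g g' u w \<le> (t/s) * bregman g g' a w + (1 - t/s) * bregman g g' w w"
    unfolding u_def by (rule breg_convex1[OF F]) (use s t s_def in auto)
  hence "bregman g g' u w \<le> (t/s) * bregman g g' a w" by (simp add: breg_self[OF F])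
  hence "bregman g g' u w * s \<le> t * bregman g g' a w" using s by (simp add: field_simps)
  ultimately show ?thesis unfolding s_def by blast
qed

lemma mod_tc_le: "norm (u - w) = t \<Longrightarrow> mod_tc g g' w t \<le> ereal (bregman g g' u w)"
  unfolding mod_tc_def by (rule INF_lower) simp

lemma sublevel_bounded:
  assumes F: "class_F g g'" and tc: "totally_convex g g'"
  shows "bounded {y. bregman g g' y x \<le> r}"
proof -
  have "mod_tc g g' x 1 > 0" using tc unfolding totally_convex_def by simp
  then obtain c where c: "0 < ereal c" "ereal c < mod_tc g g' x 1"
    using ereal_dense2 by blast
  have cpos: "c > 0" using c by simp
  have "norm (y - x) \<le> max 1 (r / c)" if "bregman g g' y x \<le> r" for y
  proof (cases "norm (y - x) \<le> 1")
    case False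
    then obtain u where u: "norm (u - x) = 1" "bregman g g' u x * norm (y - x) \<le> 1 * bregman g g' y x"
      using breg_scale[OF F, of 1 y x] by auto
    have "ereal c < ereal (bregman g g' u x)" using c(2) mod_tc_le[OF u(1)] by (meson less_le_trans)
    hence "c \<le> bregman g g' u x" by simp
    hence "c * norm (y - x) \<le> r" using u(2) that False
      by (smt (verit) mult_right_mono norm_ge_zero)
    hence "norm (y - x) \<le> r / c" using cpos by (simp add: field_simps)
    thus ?thesis by simp
  qed simp
  hence "{y. bregman g g' y x \<le> r} \<subseteq> cball x (max 1 (r / c))"
    by (auto simp: dist_norm norm_minus_commute)
  thus ?thesis using bounded_cball bounded_subset by blast
qed

lemma breg_mid:
  assumes F: "class_F g g'"
  shows "(1/2) * bregman g g' a x + (1/2) * bregman g g' b x - bregman g g' ((1/2) *\<^sub>R a + (1/2) *\<^sub>R b) x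
     = (1/2) * bregman g g' a ((1/2) *\<^sub>R a + (1/2) *\<^sub>R b) + (1/2) * bregman g g' b ((1/2) *\<^sub>R a + (1/2) *\<^sub>R b)"
  using breg_three[OF F, of "1/2" a x b] breg_three[OF F, of "1/2" a "(1/2) *\<^sub>R a + (1/2) *\<^sub>R b" b]
    breg_self[OF F, of "(1/2) *\<^sub>R a + (1/2) *\<^sub>R b"]
  by simp



lemma half_aux: fixes a b c d e :: real
  shows "(1/2)*a + (1/2)*b - c = (1/2)*d + (1/2)*e \<Longrightarrow> 0 < d \<Longrightarrow> 0 \<le> e \<Longrightarrow> c < (1/2)*a+(1/2)*b"
  by linarith

lemma half_aux2: fixes a b :: real shows "\<not> a \<le> b \<Longrightarrow> 0 < (a - b)/2" by simp
lemma half_aux3: fixes a b :: real shows "a - (a - b)/2 \<le> b \<Longrightarrow> \<not> a \<le> b \<Longrightarrow> False" by (simp add: field_simps)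

lemma min_exists:
  fixes A :: "'a::banach set"
  assumes F: "class_F g g'" and tc: "totally_convex g g'" and h2: "H2 g g'"
    and A: "A \<noteq> {}" "closed A" "convex A"
  shows "\<exists>z\<in>A. \<forall>y\<in>A. bregman g g' z x \<le> bregman g g' y x"
proof -
  define h where "h y = bregman g g' y x" for y
  define m where "m = Inf (h ` A)"
  have bdd: "bdd_below (h ` A)" unfolding h_def bdd_below_def using breg_nonneg[OF F] by blast
  have hm: "m \<le> h y" if "y \<in> A" for y unfolding m_def using bdd that by (simp add: cInf_lower)
  have "\<exists>y\<in>A. h y < m + inverse (real (Suc n))" for n
  proof -
    have "Inf (h ` A) < m + inverse (real (Suc n))" unfolding m_def by simp
    then show ?thesis using cInf_lessD[of "h ` A"] A(1) by blast
  qed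
  then obtain Y where Y: "\<And>n. Y n \<in> A" "\<And>n. h (Y n) < m + inverse (real (Suc n))" by metis
  define B where "B = {y. h y \<le> m + 1}"
  have Bb: "bounded B" unfolding B_def h_def by (rule sublevel_bounded[OF F tc])
  have midA: "(1/2) *\<^sub>R a + (1/2) *\<^sub>R b \<in> A" if "a \<in> A" "b \<in> A" for a b
    by (rule convexD[OF A(3) that]) auto
  have cau: "Cauchy Y"
    unfolding Cauchy_def
  proof (intro allI impI)
    fix e :: real assume e: "e > 0"
    have "(INF w\<in>B. mod_tc g g' w (e/2)) > 0" using h2 Bb e unfolding H2_def by simp
    then obtain \<delta> where d: "0 < ereal \<delta>" "ereal \<delta> < (INF w\<in>B. mod_tc g g' w (e/2))"
      using ereal_dense2 by blast
    have dB: "ereal \<delta> < mod_tc g g' w (e/2)" if "w \<in> B" for w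
      using d(2) INF_lower[OF that, of "\<lambda>w. mod_tc g g' w (e/2)"] by (meson less_le_trans)
    have dpos: "\<delta> > 0" using d by simp
    define d2 where "d2 = \<delta>/2"
    have d2: "\<delta> = 2 * d2" "d2 > 0" using dpos by (simp_all add: d2_def)
    obtain N where N: "inverse (real (Suc N)) < d2" using reals_Archimedean d2(2) by blast
    have small: "h (Y n) < m + d2" if "n \<ge> N" for n
    proof -
      have "inverse (real (Suc n)) \<le> inverse (real (Suc N))" using that
        by (simp add: le_imp_inverse_le)
      thus ?thesis using Y(2)[of n] N by linarith
    qed
    show "\<exists>M. \<forall>j\<ge>M. \<forall>k\<ge>M. dist (Y j) (Y k) < e"
    proof (intro exI allI impI)
      fix j k assume jk: "N \<le> j" "N \<le> k"
      show "dist (Y j) (Y k) < e"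
      proof (rule ccontr)
        assume "\<not> dist (Y j) (Y k) < e"
        hence de: "norm (Y j - Y k) \<ge> e" by (simp add: dist_norm)
        define a where "a = Y j"
        define b where "b = Y k"
        define w where "w = (1/2) *\<^sub>R a + (1/2) *\<^sub>R b"
        have wA: "w \<in> A" unfolding w_def a_def b_def using midA Y(1) by blast
        have aw: "a - w = (1/2) *\<^sub>R (a - b)" unfolding w_def by (rule mid_diff)
        have naw: "norm (a - w) \<ge> e/2" unfolding aw using de a_def b_def by simp
        have mid: "(1/2) * h a + (1/2) * h b - h w = (1/2) * bregman g g' a w + (1/2) * bregman g g' b w"
          unfolding h_def w_def by (rule breg_mid[OF F])
        have ha: "h a < m + d2" "h b < m + d2" using small jk a_def b_def by auto
        have "h w \<le> m + 1"
        proof -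
          have "inverse (real (Suc j)) \<le> 1" "inverse (real (Suc k)) \<le> 1" by (simp_all add: inverse_le_1_iff)
          hence "h a \<le> m + 1" "h b \<le> m + 1" unfolding a_def b_def using Y(2)[of j] Y(2)[of k] by linarith+
          thus ?thesis
            using mid breg_nonneg[OF F, of a w] breg_nonneg[OF F, of b w] by linarith
        qed
        hence wB: "w \<in> B" unfolding B_def by simp
        obtain u where u: "norm (u - w) = e/2" "bregman g g' u w * norm (a - w) \<le> (e/2) * bregman g g' a w"
          using breg_scale[OF F, of "e/2" a w] e naw by auto
        have "ereal \<delta> < ereal (bregman g g' u w)" using dB[OF wB] mod_tc_le[OF u(1)] by (meson less_le_trans)
        hence du: "\<delta> < bregman g g' u w" by simp
        have "bregman g g' u w * (e/2) \<le> bregman g g' u w * norm (a - w)"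
          using naw du dpos by (intro mult_left_mono) auto
        hence "bregman g g' u w * (e/2) \<le> (e/2) * bregman g g' a w" using u(2) by linarith
        hence "bregman g g' u w \<le> bregman g g' a w" using e by (simp add: mult.commute)
        hence "\<delta> < bregman g g' a w" using du by linarith
        hence "(1/2) * h a + (1/2) * h b - h w > d2"
          using mid breg_nonneg[OF F, of b w] d2(1) by linarith
        thus False using ha hm[OF wA] by linarith
      qed
    qed
  qed
  then obtain ys where ys: "Y \<longlonglongrightarrow> ys" using Cauchy_convergent_iff convergent_def by blast
  have ysA: "ys \<in> A" using closed_sequentially[OF A(2)] Y(1) ys by blast
  have hY: "(\<lambda>n. h (Y n)) \<longlonglongrightarrow> m"
  proof (rule tendsto_sandwich[OF _ _ tendsto_const LIMSEQ_inverse_real_of_nat_add])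
    show "\<forall>\<^sub>F n in sequentially. m \<le> h (Y n)" using hm Y(1) by simp
    show "\<forall>\<^sub>F n in sequentially. h (Y n) \<le> m + inverse (real (Suc n))" by (intro always_eventually allI less_imp_le Y(2))
  qed
  have L: "bounded_linear (g' x)" by (rule gd_lin[OF F])
  have lin: "(\<lambda>n. g' x (Y n - x)) \<longlonglongrightarrow> g' x (ys - x)"
    by (rule bounded_linear.tendsto[OF L]) (intro tendsto_diff ys tendsto_const)
  have gY: "(\<lambda>n. g (Y n)) \<longlonglongrightarrow> m + g x + g' x (ys - x)"
  proof -
    have "(\<lambda>n. h (Y n) + g x + g' x (Y n - x)) \<longlonglongrightarrow> m + g x + g' x (ys - x)"
      by (intro tendsto_add hY tendsto_const lin)
    moreover have "h (Y n) + g x + g' x (Y n - x) = g (Y n)" for n by (simp add: h_def bregman_def)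
    ultimately show ?thesis by simp
  qed
  have lscg: "g ys - e \<le> m + g x + g' x (ys - x)" if e: "e > 0" for e
  proof -
    have "\<forall>\<^sub>F y in at ys. g ys - e < g y" using F e unfolding class_F_def lsc_def by blast
    then obtain d where d: "d > 0" "\<And>y. y \<noteq> ys \<Longrightarrow> dist y ys < d \<Longrightarrow> g ys - e < g y"
      unfolding eventually_at by auto
    have "\<forall>\<^sub>F n in sequentially. dist (Y n) ys < d" using ys d(1) by (rule tendstoD)
    hence "\<forall>\<^sub>F n in sequentially. g ys - e \<le> g (Y n)"
    proof eventually_elim
      case (elim n)
      show ?case
      proof (cases "Y n = ys")
        case True thus ?thesis using e by simp
      next
        case False thus ?thesis using d(2)[OF False elim] by simp
      qed
    qed
    thus ?thesis by (rule tendsto_lowerbound[OF gY]) simp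
  qed
  have "g ys \<le> m + g x + g' x (ys - x)"
  proof (rule ccontr)
    assume nt: "\<not> ?thesis"
    hence "0 < (g ys - (m + g x + g' x (ys - x)))/2" by (rule half_aux2)
    from lscg[OF this] show False using nt by (rule half_aux3)
  qed
  hence "h ys \<le> m" by (simp add: h_def bregman_def)
  thus ?thesis using ysA hm unfolding h_def by force
qed

lemma bproj_props:
  fixes A :: "'a::banach set"
  assumes F: "class_F g g'" and tc: "totally_convex g g'" and h2: "H2 g g'"
    and A: "A \<noteq> {}" "closed A" "convex A"
  shows "bproj g g' A x \<in> A \<and> (\<forall>y\<in>A. bregman g g' (bproj g g' A x) x \<le> bregman g g' y x)"
proof -
  obtain z where z: "z \<in> A" "\<forall>y\<in>A. bregman g g' z x \<le> bregman g g' y x"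
    using min_exists[OF assms] by blast
  have uniq: "z2 = z" if z2: "z2 \<in> A" "\<forall>y\<in>A. bregman g g' z2 x \<le> bregman g g' y x" for z2
  proof (rule ccontr)
    assume ne: "z2 \<noteq> z"
    define w where "w = (1/2) *\<^sub>R z + (1/2) *\<^sub>R z2"
    have wA: "w \<in> A" unfolding w_def by (rule convexD[OF A(3) z(1) z2(1)]) auto
    have "z \<noteq> w"
    proof
      assume "z = w"
      hence "z - w = 0" by simp
      moreover have "z - w = (1/2) *\<^sub>R (z - z2)" unfolding w_def by (rule mid_diff)
      ultimately show False using ne by simp
    qed
    hence P: "bregman g g' z w > 0" by (rule breg_pos[OF F])
    have M: "(1/2) * bregman g g' z x + (1/2) * bregman g g' z2 x - bregman g g' w x
       = (1/2) * bregman g g' z w + (1/2) * bregman g g' z2 w"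
      unfolding w_def by (rule breg_mid[OF F])
    have N: "0 \<le> bregman g g' z2 w" by (rule breg_nonneg[OF F])
    have Q1: "bregman g g' z x \<le> bregman g g' w x" using z(2) wA by blast
    have Q2: "bregman g g' z2 x \<le> bregman g g' z x" using z2(2) z(1) by blast
    have "bregman g g' w x < (1/2) * bregman g g' z x + (1/2) * bregman g g' z2 x"
      by (rule half_aux[OF M P N])
    thus False using Q1 Q2 by linarith
  qed
  have "bproj g g' A x = z"
    unfolding bproj_def
  proof (rule the_equality)
    show "z \<in> A \<and> (\<forall>y\<in>A. bregman g g' z x \<le> bregman g g' y x)" using z by blast
    fix z2 assume "z2 \<in> A \<and> (\<forall>y\<in>A. bregman g g' z2 x \<le> bregman g g' y x)"
    thus "z2 = z" using uniq by blast
  qed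
  thus ?thesis using z by simp
qed

lemma bproj_self:
  fixes A :: "'a::banach set"
  assumes F: "class_F g g'" and tc: "totally_convex g g'" and h2: "H2 g g'"
    and A: "A \<noteq> {}" "closed A" "convex A" and x: "x \<in> A"
  shows "bproj g g' A x = x"
proof -
  have "bregman g g' (bproj g g' A x) x \<le> bregman g g' x x"
    using bproj_props[OF assms(1-6), of x] x by blast
  hence "bregman g g' (bproj g g' A x) x \<le> 0" using breg_self[OF F, of x] by simp
  thus ?thesis by (rule breg_le0[OF F])
qed



lemma cone_add:
  fixes C :: "'b::real_vector set"
  assumes "convex C" "cone C" "a \<in> C" "b \<in> C"
  shows "a + b \<in> C"
proof -
  have "(1/2) *\<^sub>R a + (1/2) *\<^sub>R b \<in> C" by (rule convexD[OF assms(1,3,4)]) auto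
  hence "(2::real) *\<^sub>R ((1/2) *\<^sub>R a + (1/2) *\<^sub>R b) \<in> C" using assms(2) unfolding cone_def by simp
  moreover have "(2::real) *\<^sub>R ((1/2) *\<^sub>R a + (1/2) *\<^sub>R b) = a + b" by (simp add: scaleR_add_right)
  ultimately show ?thesis by simp
qed

theorem corollary2p18:
  fixes K :: "'a::banach set"
    and g :: "'a \<Rightarrow> real" and g' :: "'a \<Rightarrow> 'a \<Rightarrow> real"
    and C :: "'b::banach set"
    and f :: "'a \<Rightarrow> 'a \<Rightarrow> 'b"
    and T :: "'a \<Rightarrow> 'a set"
  assumes K: "K \<noteq> {}" "closed K" "convex K"
    and g: "class_F g g'" "totally_convex g g'" "H1 g g'" "H2 g g'"
    and C: "closed C" "convex C" "cone C" "C \<inter> uminus ` C = {0}" "interior C \<noteq> {}"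
    and T_maps: "\<forall>x\<in>K. T x \<subseteq> K"
    and B1: "\<forall>x. f x x = 0"
    and B2: "\<forall>B. bounded B \<longrightarrow> uniformly_continuous_on B (\<lambda>(x, y). f x y)"
    and B3: "\<forall>x. C_convex C (f x)"
    and B4: "\<forall>x\<in>K. T x \<noteq> {} \<and> closed (T x) \<and> convex (T x)"
            "demiclosed K T" "\<forall>x\<in>K. lsc_map_at K T x" "quasi_Dg_nonexp g g' K T"
  shows "closed (DS K C f T) \<and> convex (DS K C f T)"
proof -
  note F = g(1) and tc = g(2) and h2 = g(4)
  define S where "S x = bproj g g' (T x) x" for x
  define FS where "FS = {x \<in> K. S x = x}"
  have quasi: "\<forall>p\<in>FS. \<forall>x\<in>K. bregman g g' p (S x) \<le> bregman g g' p x"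
    using B4(4) unfolding quasi_Dg_nonexp_def Let_def S_def FS_def by blast
  have FixFS: "p \<in> FS" if "p \<in> Fix K T" for p
  proof -
    have p: "p \<in> K" "p \<in> T p" using that by (auto simp: Fix_def)
    have "S p = p" unfolding S_def
      using bproj_self[OF F tc h2 _ _ _ p(2)] B4(1) p(1) by blast
    thus ?thesis using p(1) by (simp add: FS_def)
  qed
  have convFix: "convex (Fix K T)"
  proof (rule convexI)
    fix p q :: 'a and u v :: real
    assume pq: "p \<in> Fix K T" "q \<in> Fix K T" and uv: "0 \<le> u" "0 \<le> v" "u + v = 1"
    hence v: "v = 1 - u" by simp
    define z where "z = u *\<^sub>R p + (1 - u) *\<^sub>R q"
    have zK: "z \<in> K" unfolding z_def using convexD[OF K(3), of p q u v] pq uv v by (auto simp: Fix_def)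
    have Tz: "T z \<noteq> {}" "closed (T z)" "convex (T z)" using B4(1) zK by auto
    define y where "y = S z"
    have yT: "y \<in> T z" unfolding y_def S_def using bproj_props[OF F tc h2 Tz] by blast
    have Dp: "bregman g g' p y \<le> bregman g g' p z" unfolding y_def using quasi FixFS[OF pq(1)] zK by blast
    have Dq: "bregman g g' q y \<le> bregman g g' q z" unfolding y_def using quasi FixFS[OF pq(2)] zK by blast
    have e1: "u * bregman g g' p y + (1-u) * bregman g g' q y = u * g p + (1-u) * g q - g z + bregman g g' z y"
      unfolding z_def by (rule breg_three[OF F])
    have e2: "u * bregman g g' p z + (1-u) * bregman g g' q z = u * g p + (1-u) * g q - g z + bregman g g' z z"
      unfolding z_def by (rule breg_three[OF F])
    have "u * bregman g g' p y \<le> u * bregman g g' p z" using Dp uv(1) by (rule mult_left_mono)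
    moreover have "(1-u) * bregman g g' q y \<le> (1-u) * bregman g g' q z" using Dq uv v by (intro mult_left_mono) auto
    ultimately have "bregman g g' z y \<le> 0" using e1 e2 breg_self[OF F, of z] by linarith
    hence "z = y" by (rule breg_le0[OF F])
    thus "u *\<^sub>R p + v *\<^sub>R q \<in> Fix K T" using yT zK v unfolding z_def by (simp add: Fix_def)
  qed
  have closedFix: "closed (Fix K T)"
    unfolding closed_sequential_limits
  proof (intro allI impI, elim conjE)
    fix xs l assume xs: "\<forall>n. xs n \<in> Fix K T" "xs \<longlonglongrightarrow> l"
    have "weak_conv xs l" unfolding weak_conv_def
      using xs(2) by (auto intro: bounded_linear.tendsto)
    moreover have "\<forall>k. xs k \<in> K" using xs(1) by (simp add: Fix_def)
    moreover have "(\<lambda>k. infdist (xs k) (T (xs k))) \<longlonglongrightarrow> 0"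
      using xs(1) by (simp add: Fix_def)
    ultimately show "l \<in> Fix K T" using B4(2) unfolding demiclosed_def by blast
  qed
  define P where "P = {x \<in> K. \<forall>y\<in>K. f y x \<in> uminus ` C}"
  have cont: "isCont (f y) x0" for y x0
  proof -
    have "continuous_on (cball (y, x0) 1) (\<lambda>(x, y). f x y)"
      using B2 bounded_cball uniformly_continuous_imp_continuous by blast
    hence c1: "isCont (\<lambda>(x, y). f x y) (y, x0)"
    proof (rule continuous_on_interior)
      have "ball (y, x0) 1 \<subseteq> interior (cball (y, x0) 1)"
        by (rule interior_maximal) auto
      thus "(y, x0) \<in> interior (cball (y, x0) 1)" by auto
    qed
    have c0: "isCont (\<lambda>z. (y, z)) x0" by (intro continuous_intros)
    have "isCont (\<lambda>z. (\<lambda>(x, y). f x y) (y, z)) x0"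
      by (rule isCont_o2[OF c0 c1])
    thus ?thesis by simp
  qed
  have clC: "closed (uminus ` C)" using closed_negations[OF C(1)] by simp
  have "P = K \<inter> (\<Inter>y\<in>K. f y -` (uminus ` C))" unfolding P_def by auto
  moreover have "closed (f y -` (uminus ` C))" for y
    by (rule continuous_closed_vimage[OF clC]) (use cont in auto)
  ultimately have closedP: "closed P" using K(2) by auto
  have convP: "convex P"
  proof (rule convexI)
    fix p q :: 'a and u v :: real
    assume pq: "p \<in> P" "q \<in> P" and uv: "0 \<le> u" "0 \<le> v" "u + v = 1"
    hence v: "v = 1 - u" by simp
    define z where "z = u *\<^sub>R p + (1 - u) *\<^sub>R q"
    have zK: "z \<in> K" unfolding z_def using convexD[OF K(3), of p q u v] pq uv v by (auto simp: P_def)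
    have "f y z \<in> uminus ` C" if y: "y \<in> K" for y
    proof -
      obtain c1 where c1: "c1 \<in> C" "f y p = - c1" using pq(1) y unfolding P_def by auto
      obtain c2 where c2: "c2 \<in> C" "f y q = - c2" using pq(2) y unfolding P_def by auto
      define c3 where "c3 = (u *\<^sub>R f y p + (1 - u) *\<^sub>R f y q) - f y z"
      have c3: "c3 \<in> C" using B3 uv v unfolding C_convex_def c3_def z_def by auto
      have c12: "u *\<^sub>R c1 + (1 - u) *\<^sub>R c2 \<in> C"
        by (rule convexD[OF C(2) c1(1) c2(1)]) (use uv v in auto)
      have sum: "(u *\<^sub>R c1 + (1 - u) *\<^sub>R c2) + c3 \<in> C" by (rule cone_add[OF C(2) C(3) c12 c3])
      have "f y z = - ((u *\<^sub>R c1 + (1 - u) *\<^sub>R c2) + c3)"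
        unfolding c3_def c1(2) c2(2) by (simp add: algebra_simps)
      thus ?thesis using sum by blast
    qed
    thus "u *\<^sub>R p + v *\<^sub>R q \<in> P" using zK v unfolding z_def P_def by simp
  qed
  have "DS K C f T = Fix K T \<inter> P" unfolding DS_def Fix_def P_def by auto
  thus ?thesis using closedFix closedP convFix convP by (simp add: closed_Int convex_Int)
qed

end
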